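(* Suppose $\lambda$ is a regular cardinal and $S=\langle I\times n,\mathcal{R}\rangle$ is a $\lambda$-system with $n<\omega$ and $|\mathcal{R}|<\omega$. Then $S$ has a cofinal branch.
   Context: Let $\lambda$ be an infinite regular cardinal. A relation $R$ is tree-like if $a<_R c$ and $b<_R c$ imply $a,b$ are $R$-comparable ($a=b$, $a<_Rb$ or $b<_Ra$). A $\lambda$-system $\langle I\times\kappa,\mathcal{R}\rangle$ consists of an unbounded $I\subseteq\lambda$, $0<\kappa<\lambda$, levels $S_\alpha=\{\alpha\}\times\kappa$ for $\alpha\in I$ (with $S$ denoting their union), and a set $\mathcal{R}$ of binary transitive tree-like relations on $S$ with $|\mathcal{R}|<\lambda$, such that $(\alpha_0,\beta_0)<_R(\alpha_1,\beta_1)$ implies $\alpha_0<\alpha_1$, and for all $\alpha_0<\alpha_1$ in $I$ there are $\beta_0,\beta_1<\kappa$ and $R\in\mathcal{R}$ with $(\alpha_0,\beta_0)<_R(\alpha_1,\beta_1)$. A branch through $R$ is a set of pairwise $R$-comparable elements; it is cofinal if it meets $S_\alpha$ for unboundedly many $\alpha\in I$. *)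

theory Defs
  imports Main
begin

(* The regular cardinal lambda is represented by a cardinal order r on a type 'a
   (card_order r, so Field r = UNIV); ordinals below lambda are the elements of 'a,
   with the strict order  a < b  iff  (a,b) \<in> r \<and> a \<noteq> b. *)

definition strict_below :: "'a rel \<Rightarrow> 'a \<Rightarrow> 'a \<Rightarrow> bool" where
  "strict_below r a b \<longleftrightarrow> (a, b) \<in> r \<and> a \<noteq> b"

definition unbounded_in :: "'a rel \<Rightarrow> 'a set \<Rightarrow> bool" where
  "unbounded_in r I \<longleftrightarrow> (\<forall>a. \<exists>b\<in>I. (a, b) \<in> r)"

definition sys_points :: "'a set \<Rightarrow> nat \<Rightarrow> ('a \<times> nat) set" where
  "sys_points I n = I \<times> {..<n}"

definition tree_like :: "'b rel \<Rightarrow> bool" where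
  "tree_like R \<longleftrightarrow> (\<forall>a b c. (a, c) \<in> R \<and> (b, c) \<in> R \<longrightarrow> a = b \<or> (a, b) \<in> R \<or> (b, a) \<in> R)"

(* <I \<times> n, RR> is a lambda-system (lambda given by r); elements of RR are the strict relations <_R *)
definition lambda_system :: "'a rel \<Rightarrow> 'a set \<Rightarrow> nat \<Rightarrow> ('a \<times> nat) rel set \<Rightarrow> bool" where
  "lambda_system r I n RR \<longleftrightarrow>
     unbounded_in r I \<and> 0 < n \<and> ordLess2 (card_of RR) r \<and>
     (\<forall>R\<in>RR. R \<subseteq> sys_points I n \<times> sys_points I n \<and> trans R \<and> tree_like R \<and>
        (\<forall>a0 b0 a1 b1. ((a0, b0), (a1, b1)) \<in> R \<longrightarrow> strict_below r a0 a1)) \<and>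
     (\<forall>a0\<in>I. \<forall>a1\<in>I. strict_below r a0 a1 \<longrightarrow>
        (\<exists>b0<n. \<exists>b1<n. \<exists>R\<in>RR. ((a0, b0), (a1, b1)) \<in> R))"

definition is_branch :: "'a set \<Rightarrow> nat \<Rightarrow> ('a \<times> nat) rel \<Rightarrow> ('a \<times> nat) set \<Rightarrow> bool" where
  "is_branch I n R B \<longleftrightarrow> B \<subseteq> sys_points I n \<and>
     (\<forall>x\<in>B. \<forall>y\<in>B. x = y \<or> (x, y) \<in> R \<or> (y, x) \<in> R)"

definition cofinal_branch :: "'a rel \<Rightarrow> 'a set \<Rightarrow> nat \<Rightarrow> ('a \<times> nat) rel \<Rightarrow> ('a \<times> nat) set \<Rightarrow> bool" where
  "cofinal_branch r I n R B \<longleftrightarrow> is_branch I n R B \<and>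
     (\<forall>g. \<exists>a\<in>I. (g, a) \<in> r \<and> (\<exists>b. (a, b) \<in> B))"

end

theory Submission
  imports Defs
begin

lemma ultra_exists:
  fixes Q :: "'a \<Rightarrow> 'a \<Rightarrow> bool" and I :: "'a set"
  assumes unb: "\<forall>g. \<exists>a\<in>I. Q g a"
    and dir: "\<forall>g1 g2. \<exists>g. \<forall>a. Q g a \<longrightarrow> Q g1 a \<and> Q g2 a"
  shows "\<exists>U. (\<forall>X\<in>U. \<forall>g. \<exists>a\<in>I. Q g a \<and> a \<in> X) \<and> (\<forall>X. X \<in> U \<or> - X \<in> U)
      \<and> (\<forall>X\<in>U. \<forall>Y\<in>U. X \<inter> Y \<in> U)"
proof -
  define Pr where "Pr U \<longleftrightarrow> (\<forall>F. finite F \<and> F \<subseteq> U \<longrightarrow> (\<forall>g. \<exists>a\<in>I. Q g a \<and> (\<forall>X\<in>F. a \<in> X)))"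
    for U :: "'a set set"
  define A where "A = {U. Pr U}"
  have "\<forall>C\<in>chains A. \<Union>C \<in> A"
  proof
    fix C assume C: "C \<in> chains A"
    show "\<Union>C \<in> A" unfolding A_def mem_Collect_eq Pr_def
    proof (intro allI impI)
      fix F g assume F: "finite F \<and> F \<subseteq> \<Union>C"
      show "\<exists>a\<in>I. Q g a \<and> (\<forall>X\<in>F. a \<in> X)"
      proof (cases "C = {}")
        case True then have "F = {}" using F by auto
        then show ?thesis using unb by auto
      next
        case False
        have ch: "subset.chain UNIV C" using C unfolding chains_def chain_subset_alt_def by auto
        obtain B where "B \<in> C" "F \<subseteq> B"
          using finite_subset_Union_chain[OF _ _ False ch] F by blast
        moreover have "Pr B" using \<open>B \<in> C\<close> C unfolding chains_def A_def by auto
        ultimately show ?thesis using F unfolding Pr_def by blast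
      qed
    qed
  qed
  then obtain M where MA: "M \<in> A" and Mmax: "\<forall>X\<in>A. M \<subseteq> X \<longrightarrow> X = M"
    using Zorn_Lemma by blast
  have PM: "Pr M" using MA A_def by auto
  have PM': "\<exists>a\<in>I. Q g a \<and> (\<forall>X\<in>F. a \<in> X)" if "finite F" "F \<subseteq> M" for F g
    using PM that unfolding Pr_def by blast
  have ins: "Z \<in> M" if "Pr (insert Z M)" for Z
    using Mmax that unfolding A_def by blast
  have m1: "\<forall>X\<in>M. \<forall>g. \<exists>a\<in>I. Q g a \<and> a \<in> X"
  proof (intro ballI allI)
    fix X g assume "X \<in> M"
    then have "finite {X}" "{X} \<subseteq> M" by auto
    from PM'[OF this] show "\<exists>a\<in>I. Q g a \<and> a \<in> X" by blast
  qed
  have m2: "\<forall>X. X \<in> M \<or> - X \<in> M"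
  proof (rule ccontr)
    assume "\<not> (\<forall>X. X \<in> M \<or> - X \<in> M)"
    then obtain X where X1: "X \<notin> M" and X2: "- X \<notin> M" by blast
    have "\<not> Pr (insert (X) M)" using X1 ins by blast
    then obtain F1 where F1: "finite F1" "F1 \<subseteq> insert (X) M"
      and G1': "\<not> (\<forall>g. \<exists>a\<in>I. Q g a \<and> (\<forall>Y\<in>F1. a \<in> Y))"
      unfolding Pr_def by auto
    then obtain g1 where G1: "\<forall>a\<in>I. Q g1 a \<longrightarrow> \<not> (\<forall>Y\<in>F1. a \<in> Y)"
      by auto
    have "\<not> Pr (insert (- X) M)" using X2 ins by blast
    then obtain F2 where F2: "finite F2" "F2 \<subseteq> insert (- X) M"
      and G2': "\<not> (\<forall>g. \<exists>a\<in>I. Q g a \<and> (\<forall>Y\<in>F2. a \<in> Y))"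
      unfolding Pr_def by auto
    then obtain g2 where G2: "\<forall>a\<in>I. Q g2 a \<longrightarrow> \<not> (\<forall>Y\<in>F2. a \<in> Y)"
      by auto
    obtain g where g: "\<forall>a. Q g a \<longrightarrow> Q g1 a \<and> Q g2 a" using dir by blast
    have fin: "finite ((F1 - {X}) \<union> (F2 - {- X}))" using F1(1) F2(1) by simp
    have sub: "(F1 - {X}) \<union> (F2 - {- X}) \<subseteq> M" using F1(2) F2(2) by blast
    obtain a where a: "a \<in> I" "Q g a" "\<forall>Y\<in>(F1 - {X}) \<union> (F2 - {- X}). a \<in> Y"
      using PM'[OF fin sub, of g] by blast
    show False
    proof (cases "a \<in> X")
      case True
      then have "\<forall>Y\<in>F1. a \<in> Y" using a(3) by blast
      then show False using G1 a g by blast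
    next
      case False
      then have "\<forall>Y\<in>F2. a \<in> Y" using a(3) by blast
      then show False using G2 a g by blast
    qed
  qed
  have m3: "\<forall>X\<in>M. \<forall>Y\<in>M. X \<inter> Y \<in> M"
  proof (intro ballI)
    fix X Y assume XY: "X \<in> M" "Y \<in> M"
    have "Pr (insert (X \<inter> Y) M)" unfolding Pr_def
    proof (intro allI impI)
      fix F g assume F: "finite F \<and> F \<subseteq> insert (X \<inter> Y) M"
      have fin: "finite ((F - {X \<inter> Y}) \<union> {X, Y})" using F by simp
      have sub: "(F - {X \<inter> Y}) \<union> {X, Y} \<subseteq> M" using F XY by blast
      obtain a where a: "a \<in> I" "Q g a" "\<forall>Z\<in>(F - {X \<inter> Y}) \<union> {X, Y}. a \<in> Z"
        using PM'[OF fin sub, of g] by blast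
      then show "\<exists>a\<in>I. Q g a \<and> (\<forall>X\<in>F. a \<in> X)" by auto
    qed
    then show "X \<inter> Y \<in> M" using ins by blast
  qed
  show ?thesis using m1 m2 m3 by blast
qed

lemma ultra_union:
  fixes U :: "'a set set" and T :: "'b set"
  assumes m1: "\<forall>X\<in>U. \<exists>a. a \<in> X" and m2: "\<forall>X. X \<in> U \<or> - X \<in> U"
    and m3: "\<forall>X\<in>U. \<forall>Y\<in>U. X \<inter> Y \<in> U"
    and fin: "finite T"
  shows "(\<Union>t\<in>T. A t) \<in> U \<Longrightarrow> \<exists>t\<in>T. A t \<in> U"
  using fin
proof (induction T rule: finite_induct)
  case empty
  then have "{} \<in> U" by simp
  then show ?case using m1 by blast
next
  case (insert t T)
  show ?case
  proof (rule ccontr)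
    assume nc: "\<not> ?case"
    have a1: "A t \<notin> U" using nc by blast
    have a2: "(\<Union>t\<in>T. A t) \<notin> U" using nc insert.IH by blast
    have b1: "- A t \<in> U" using a1 m2 by blast
    have b2: "- (\<Union>t\<in>T. A t) \<in> U" using a2 m2 by blast
    have b3: "- A t \<inter> - (\<Union>t\<in>T. A t) \<in> U" using m3 b1 b2 by blast
    have "(\<Union>t\<in>insert t T. A t) \<inter> (- A t \<inter> - (\<Union>t\<in>T. A t)) \<in> U"
      using m3 insert.prems b3 by blast
    then obtain a where "a \<in> (\<Union>t\<in>insert t T. A t) \<inter> (- A t \<inter> - (\<Union>t\<in>T. A t))"
      using m1 by blast
    then show False by blast
  qed
qed

lemma nomax:
  assumes co: "card_order (r :: 'a rel)" and inf: "infinite (UNIV :: 'a set)"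
  shows "\<exists>x. (x, m) \<notin> r"
proof (rule ccontr)
  assume "\<not> (\<exists>x. (x, m) \<notin> r)"
  then have all: "\<forall>x. (x, m) \<in> r" by blast
  have F: "Field r = UNIV" and C: "Card_order r" using card_order_on_Card_order[OF co] by auto
  have U: "underS r m = UNIV - {m}" using all unfolding underS_def by auto
  have l: "(card_of (underS r m), r) \<in> ordLess" using card_of_underS[OF C] F by auto
  obtain h where "bij_betw h (UNIV :: 'a set) (UNIV - {m})" using infinite_imp_bij_betw[of "UNIV :: 'a set" m] inf by auto
  then have "(card_of (UNIV :: 'a set), card_of (underS r m)) \<in> ordIso" using U card_of_ordIso by metis
  moreover have "(card_of (UNIV :: 'a set), r) \<in> ordIso" using card_of_Field_ordIso[OF C] F by simp
  ultimately have "(card_of (underS r m), r) \<in> ordIso" using ordIso_symmetric ordIso_transitive by blast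
  then show False using l not_ordLess_ordIso by blast
qed

theorem mainTheorem7:
  fixes r :: "'a rel" and I :: "'a set" and n :: nat and RR :: "('a \<times> nat) rel set"
  assumes "card_order r" and "infinite (UNIV :: 'a set)" and "regularCard r"
    and "lambda_system r I n RR"
    and "finite RR"
  shows "\<exists>R\<in>RR. \<exists>B. cofinal_branch r I n R B"
proof -
  have wo: "well_order_on UNIV r" using card_order_on_well_order_on assms(1) by blast
  then have tr: "trans r" and an: "antisym r" and to: "total_on UNIV r" and rf: "refl_on UNIV r"
    unfolding well_order_on_def linear_order_on_def partial_order_on_def preorder_on_def by auto
  have refl: "(x, x) \<in> r" for x using rf unfolding refl_on_def by auto
  have tot: "(x, y) \<in> r \<or> (y, x) \<in> r" for x y
    using to refl unfolding total_on_def by (cases "x = y") blast+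
  have ls: "lambda_system r I n RR" by fact
  have unbI: "\<forall>g. \<exists>b\<in>I. (g, b) \<in> r" using ls unfolding lambda_system_def unbounded_in_def by auto
  have npos: "0 < n" using ls unfolding lambda_system_def by auto
  have links: "\<forall>a0\<in>I. \<forall>a1\<in>I. strict_below r a0 a1 \<longrightarrow>
        (\<exists>b0<n. \<exists>b1<n. \<exists>R\<in>RR. ((a0, b0), (a1, b1)) \<in> R)"
    using ls unfolding lambda_system_def by auto
  have tl: "\<forall>R\<in>RR. tree_like R" using ls unfolding lambda_system_def by auto
  define Q where "Q g a \<longleftrightarrow> strict_below r g a" for g a
  have unb: "\<forall>g. \<exists>a\<in>I. Q g a"
  proof
    fix g
    obtain h where h: "(h, g) \<notin> r" using nomax[OF assms(1,2)] by blast
    then have gh: "(g, h) \<in> r" "h \<noteq> g" using tot refl by blast+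
    obtain a where a: "a \<in> I" "(h, a) \<in> r" using unbI by blast
    have "(g, a) \<in> r" using gh a tr unfolding trans_def by blast
    moreover have "a \<noteq> g" using a h by auto
    ultimately show "\<exists>a\<in>I. Q g a" using a unfolding Q_def strict_below_def by blast
  qed
  have dir: "\<forall>g1 g2. \<exists>g. \<forall>a. Q g a \<longrightarrow> Q g1 a \<and> Q g2 a"
  proof (intro allI)
    fix g1 g2
    show "\<exists>g. \<forall>a. Q g a \<longrightarrow> Q g1 a \<and> Q g2 a"
    proof (cases "(g1, g2) \<in> r")
      case True
      show ?thesis
      proof (intro exI[of _ g2] allI impI)
        fix a assume "Q g2 a"
        then have a: "(g2, a) \<in> r" "a \<noteq> g2" unfolding Q_def strict_below_def by auto
        have "(g1, a) \<in> r" using True a tr unfolding trans_def by blast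
        moreover have "a \<noteq> g1" using True a an unfolding antisym_def by blast
        ultimately show "Q g1 a \<and> Q g2 a" using a unfolding Q_def strict_below_def by auto
      qed
    next
      case False
      then have F: "(g2, g1) \<in> r" using tot by blast
      show ?thesis
      proof (intro exI[of _ g1] allI impI)
        fix a assume "Q g1 a"
        then have a: "(g1, a) \<in> r" "a \<noteq> g1" unfolding Q_def strict_below_def by auto
        have "(g2, a) \<in> r" using F a tr unfolding trans_def by blast
        moreover have "a \<noteq> g2" using F a False by blast
        ultimately show "Q g1 a \<and> Q g2 a" using a unfolding Q_def strict_below_def by auto
      qed
    qed
  qed
  obtain U where m1: "\<forall>X\<in>U. \<forall>g. \<exists>a\<in>I. Q g a \<and> a \<in> X" and m2: "\<forall>X. X \<in> U \<or> - X \<in> U"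
      and m3: "\<forall>X\<in>U. \<forall>Y\<in>U. X \<inter> Y \<in> U"
    using ultra_exists[OF unb dir] by blast
  have m1': "\<forall>X\<in>U. \<exists>a. a \<in> X" using m1 by blast
  define T where "T = {..<n} \<times> RR \<times> {..<n}"
  have finT: "finite T" unfolding T_def using assms(5) by auto
  define L where "L (t::nat \<times> ('a \<times> nat) rel \<times> nat) (al::'a) = {ga::'a. case t of (b, R, b') \<Rightarrow> ((al, b), (ga, b')) \<in> R}" for t al
  have step1: "\<exists>t\<in>T. L t al \<in> U" if al: "al \<in> I" for al
  proof -
    have "(\<Union>t\<in>T. L t al) \<in> U"
    proof (rule ccontr)
      assume "(\<Union>t\<in>T. L t al) \<notin> U"
      then have "- (\<Union>t\<in>T. L t al) \<in> U" using m2 by blast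
      then obtain a where a: "a \<in> I" "Q al a" "a \<notin> (\<Union>t\<in>T. L t al)" using m1 by blast
      obtain b0 b1 R where "b0 < n" "b1 < n" "R \<in> RR" "((al, b0), (a, b1)) \<in> R"
        using links al a unfolding Q_def by blast
      then have "a \<in> L (b0, R, b1) al" "(b0, R, b1) \<in> T" unfolding L_def T_def by auto
      then show False using a by blast
    qed
    then show ?thesis using ultra_union[OF m1' m2 m3 finT, of "\<lambda>t. L t al"] by blast
  qed
  define f where "f al = (SOME t. t \<in> T \<and> L t al \<in> U)" for al
  have fT: "f al \<in> T \<and> L (f al) al \<in> U" if "al \<in> I" for al
    using someI_ex[of "\<lambda>t. t \<in> T \<and> L t al \<in> U"] step1[OF that] unfolding f_def by blast
  have IU: "I \<in> U"
  proof (rule ccontr)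
    assume "I \<notin> U" then have "- I \<in> U" using m2 by blast
    then show False using m1 by blast
  qed
  have "I = (\<Union>t\<in>T. {al\<in>I. f al = t})" using fT by auto
  then obtain t where t: "t \<in> T" and AU: "{al\<in>I. f al = t} \<in> U"
    using IU ultra_union[OF m1' m2 m3 finT, of "\<lambda>t. {al\<in>I. f al = t}"] by auto
  define A where "A = {al\<in>I. f al = t}"
  obtain b R b' where tt: "t = (b, R, b')" by (cases t) auto
  have bR: "b < n" "R \<in> RR" using t tt T_def by auto
  define B where "B = A \<times> {b}"
  have "cofinal_branch r I n R B"
    unfolding cofinal_branch_def is_branch_def
  proof (intro conjI ballI allI)
    show "B \<subseteq> sys_points I n" unfolding B_def A_def sys_points_def using bR by auto
  next
    fix x y assume xy: "x \<in> B" "y \<in> B"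
    then obtain a1 a2 where x: "x = (a1, b)" "a1 \<in> A" and y: "y = (a2, b)" "a2 \<in> A"
      unfolding B_def by auto
    have "L t a1 \<in> U" using fT x unfolding A_def by force
    moreover have "L t a2 \<in> U" using fT y unfolding A_def by force
    ultimately
    have "L t a1 \<inter> L t a2 \<in> U" using m3 by blast
    then obtain ga where "ga \<in> L t a1" "ga \<in> L t a2" using m1' by blast
    then have "((a1, b), (ga, b')) \<in> R" "((a2, b), (ga, b')) \<in> R" unfolding L_def tt by auto
    then show "x = y \<or> (x, y) \<in> R \<or> (y, x) \<in> R" using tl bR x y unfolding tree_like_def by blast
  next
    fix g
    obtain a where "a \<in> I" "Q g a" "a \<in> A" using m1 AU A_def by blast
    then show "\<exists>a\<in>I. (g, a) \<in> r \<and> (\<exists>b. (a, b) \<in> B)"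
      unfolding Q_def strict_below_def B_def by auto
  qed
  then show ?thesis using bR by blast
qed

end
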